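(* Define $A_n^r(q)$ for integers $n,r\ge 0$ by $A_0^0(q)=1$, $A_0^r(q)=0$ for $r\ge1$, $A_{n+1}^0(q)=1$ for $n\ge 0$, and for $n,r\ge 0$ $$A_{n+1}^{r+1}(q)=q^{r+1}A_n^{r+1}(q)+(q^{n-r}-q^r)A_n^r(q).$$ Then for all integers $n,r\ge 0$, $$A_n^r(q)=\mathrm{CT}_w\left[\frac{(1-w)(1+w)^n q^{r(n-r)}}{w^r}\sum_{i=0}^{\infty}(-1)^i q^{-(i+1)i/2-i(n-2r)}\binom{i+n-2r}{i}_q w^i\right].$$
   Context: For a formal Laurent series $P(w)$ (with coefficients Laurent polynomials in $q$), $\mathrm{CT}_w P(w)$ denotes the coefficient of $w^0$. The $q$-binomial coefficient is $\binom{m}{k}_q=\frac{(1-q^m)(1-q^{m-1})\cdots(1-q^{m-k+1})}{(1-q)(1-q^2)\cdots(1-q^k)}$ when $0\le k\le m$ (integers), and $\binom{m}{k}_q=0$ otherwise (in particular when $m<k$ or $m<0$). *)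

theory Defs
  imports "HOL-Computational_Algebra.Formal_Laurent_Series"
begin

text \<open>The variable q, as a formal Laurent series over the rationals
  (a field containing the Laurent polynomials in q).\<close>
abbreviation qv :: "rat fls" where "qv \<equiv> fls_X"

abbreviation qpow :: "int \<Rightarrow> rat fls" where "qpow k \<equiv> fls_X_intpow k"

definition qbinom :: "int \<Rightarrow> int \<Rightarrow> rat fls" where
  "qbinom m k = (if 0 \<le> k \<and> k \<le> m then
     (\<Prod>j<nat k. (1 - qpow (m - int j))) / (\<Prod>j=1..nat k. (1 - qpow (int j)))
   else 0)"

fun A :: "nat \<Rightarrow> nat \<Rightarrow> rat fls" where
  "A 0 0 = 1"
| "A 0 (Suc r) = 0"
| "A (Suc n) 0 = 1"
| "A (Suc n) (Suc r) = qpow (int r + 1) * A n (Suc r)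
      + (qpow (int n - int r) - qpow (int r)) * A n r"

text \<open>Constant term in w of a formal Laurent series in w whose coefficients
  are Laurent series in q.\<close>
definition CT :: "rat fls fls \<Rightarrow> rat fls" where
  "CT P = fls_nth P 0"

definition Sser :: "nat \<Rightarrow> nat \<Rightarrow> rat fls fls" where
  "Sser n r = fps_to_fls (Abs_fps (\<lambda>i.
      (-1) ^ i * qpow (- (int (i + 1) * int i div 2) - int i * (int n - 2 * int r))
      * qbinom (int i + int n - 2 * int r) (int i)))"

end

theory Submission
  imports Defs
begin

definition T :: "int \<Rightarrow> nat \<Rightarrow> rat fls" where
  "T m i = (-1) ^ i * qpow (- (int (i + 1) * int i div 2) - int i * m) * qbinom (int i + m) (int i)"

definition coef :: "nat \<Rightarrow> nat \<Rightarrow> rat fls" where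
  "coef n k = ((1 - fps_X) * (1 + fps_X) ^ n :: rat fls fps) $ k"

definition B :: "nat \<Rightarrow> nat \<Rightarrow> rat fls" where
  "B n r = qpow (int r * (int n - int r)) * (\<Sum>k\<le>r. coef n k * T (int n - 2 * int r) (r - k))"

definition P :: "int \<Rightarrow> nat \<Rightarrow> rat fls" where
  "P N k = (\<Prod>j<k. (1 - qpow (N - int j)))"

definition D :: "nat \<Rightarrow> rat fls" where
  "D k = (\<Prod>j=1..k. (1 - qpow (int j)))"

lemma qpow_add: "qpow a * qpow b = qpow (a + b)"
  using fls_X_intpow_times_fls_X_intpow[of a b] by simp

lemma qpow_add': "a + b = c \<Longrightarrow> qpow a * qpow b = qpow c"
  by (simp only: qpow_add)

lemma one_minus_qpow_ne: "i \<noteq> 0 \<Longrightarrow> 1 - qpow i \<noteq> 0"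
proof
  assume "i \<noteq> 0" "1 - qpow i = 0"
  then have "qpow i = 1" by simp
  then have "fls_nth (qpow i) i = fls_nth (1::rat fls) i" by simp
  with \<open>i \<noteq> 0\<close> show False by simp
qed

lemma D_ne: "D k \<noteq> 0"
proof -
  have "\<forall>j\<in>{1..k}. 1 - qpow (int j) \<noteq> 0" using one_minus_qpow_ne by auto
  then show ?thesis unfolding D_def by (simp only: prod_zero_iff finite_atLeastAtMost) blast
qed

lemma D_Suc: "D (Suc k) = D k * (1 - qpow (int k + 1))"
proof -
  have "D (Suc k) = D k * (1 - qpow (int (Suc k)))"
    unfolding D_def by (simp only: prod.cl_ivl_Suc) simp
  then show ?thesis by (simp only: of_nat_Suc add.commute[of "1::int"])
qed

lemma P_Suc1: "P N (Suc k) = P N k * (1 - qpow (N - int k))"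
  unfolding P_def by simp

lemma P_Suc2: "P N (Suc k) = (1 - qpow N) * P (N - 1) k"
proof -
  have "P N (Suc k) = (1 - qpow (N - int 0)) * (\<Prod>j<k. (1 - qpow (N - int (Suc j))))"
    unfolding P_def by (rule prod.lessThan_Suc_shift)
  also have "(\<Prod>j<k. (1 - qpow (N - int (Suc j)))) = P (N - 1) k"
    unfolding P_def by (rule prod.cong) (simp_all add: algebra_simps)
  finally show ?thesis by simp
qed

lemma qbinom_alt: "N \<ge> 0 \<Longrightarrow> qbinom N (int k) = P N k / D k"
proof (cases "int k \<le> N")
  case True
  assume "N \<ge> 0"
  then show ?thesis using True unfolding qbinom_def P_def D_def by simp
next
  case False
  assume "N \<ge> 0"
  then have "nat N < k" using False by auto
  then have "P N k = 0" unfolding P_def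
    by (subst prod_zero_iff) (use \<open>N \<ge> 0\<close> in \<open>auto intro!: bexI[of _ "nat N"]\<close>)
  then show ?thesis using False unfolding qbinom_def by simp
qed

lemma qbinom_lt: "N < k \<Longrightarrow> qbinom N k = 0"
  unfolding qbinom_def by simp

lemma qbinom_0: "qbinom N 0 = (if N \<ge> 0 then 1 else 0)"
  unfolding qbinom_def by simp

lemma pascal:
  "qbinom N (int k + 1) = qbinom (N - 1) (int k) + qpow (int k + 1) * qbinom (N - 1) (int k + 1)"
proof (cases "N \<ge> int k + 1")
  case False
  then show ?thesis by (simp add: qbinom_lt)
next
  case True
  have "N \<ge> 0" using True by simp
  have e1: "qbinom N (int k + 1) = P N (Suc k) / D (Suc k)"
    using qbinom_alt[OF \<open>N \<ge> 0\<close>, of "Suc k"] unfolding of_nat_Suc add.commute[of "1::int"] .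
  have e2: "qbinom (N - 1) (int k) = P (N - 1) k / D k"
    using qbinom_alt[of "N - 1" k] True by simp
  have "N - 1 \<ge> 0" using True by simp
  have e3: "qbinom (N - 1) (int k + 1) = P (N - 1) (Suc k) / D (Suc k)"
    using qbinom_alt[OF \<open>N - 1 \<ge> 0\<close>, of "Suc k"] unfolding of_nat_Suc add.commute[of "1::int"] .
  have a: "qpow (int k + 1) * qpow (N - 1 - int k) = qpow N"
    by (rule qpow_add') simp
  have ne: "1 - qpow (int k + 1) \<noteq> 0" by (rule one_minus_qpow_ne) simp
  have dn: "D k \<noteq> 0" by (rule D_ne)
  show ?thesis
    unfolding e1 e2 e3 D_Suc P_Suc2[of N k] P_Suc1[of "N - 1" k]
    using ne dn a by (simp add: field_simps)
qed

lemma absorb: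
  "(qpow m - 1) * qbinom (m + int j) (int j) = (qpow (m + int j) - 1) * qbinom (m + int j - 1) (int j)"
proof (cases "m \<ge> 1")
  case False
  then show ?thesis
  proof (cases "m = 0")
    case True then show ?thesis by (simp add: qbinom_lt)
  next
    case False
    with \<open>\<not> m \<ge> 1\<close> show ?thesis by (simp add: qbinom_lt)
  qed
next
  case True
  have e1: "qbinom (m + int j) (int j) = P (m + int j) j / D j"
    using qbinom_alt[of "m + int j" j] True by simp
  have e2: "qbinom (m + int j - 1) (int j) = P (m + int j - 1) j / D j"
    using qbinom_alt[of "m + int j - 1" j] True by simp
  have "P (m + int j) (Suc j) = P (m + int j) j * (1 - qpow m)"
    using P_Suc1[of "m + int j" j] by simp
  moreover have "P (m + int j) (Suc j) = (1 - qpow (m + int j)) * P (m + int j - 1) j"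
    by (rule P_Suc2)
  ultimately have "(qpow m - 1) * P (m + int j) j = (qpow (m + int j) - 1) * P (m + int j - 1) j"
    by (simp add: algebra_simps)
  then show ?thesis unfolding e1 e2 by (simp add: field_simps D_ne)
qed

lemma key_alg:
  fixes Q1 Q2 Q3 Q4 a1 pm pmj nm pj b :: "'a::comm_ring_1"
  assumes "Q1 = Q2 + a1 * Q3" "(pm - 1) * Q4 = (pmj - 1) * Q2" "nm * pm = 1" "nm * pmj = pj" "nm * a1 = b"
  shows "- nm * Q1 + pj * Q2 = - b * Q3 + (1 - nm) * Q4"
proof -
  have "nm * ((pm - 1) * Q4) = nm * ((pmj - 1) * Q2)" using assms(2) by simp
  then have "(1 - nm) * Q4 = (pj - nm) * Q2" using assms(3,4) by (simp add: algebra_simps)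
  then show ?thesis using assms(1,5) by (simp add: algebra_simps)
qed

lemma half_shift: "int (Suc j + 1) * int (Suc j) div 2 = int (j + 1) * int j div 2 + int j + 1"
proof -
  have "int (Suc j + 1) * int (Suc j) = int (j + 1) * int j + 2 * (int j + 1)"
    by (simp add: algebra_simps)
  moreover have "(a + 2 * b) div 2 = a div 2 + b" for a b :: int by presburger
  ultimately show ?thesis by simp
qed

lemma T_id:
  "T (m - 1) (Suc j) + T (m - 1) j = T (m - 2) (Suc j) + (1 - qpow (- m)) * T m j"
proof -
  define E where "E = - (int (j + 1) * int j div 2) - int j * m"
  define e where "e = qpow E"
  define s where "s = ((-1) ^ j :: rat fls)"
  define Q1 where "Q1 = qbinom (m + int j) (int j + 1)"
  define Q2 where "Q2 = qbinom (m + int j - 1) (int j)"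
  define Q3 where "Q3 = qbinom (m + int j - 1) (int j + 1)"
  define Q4 where "Q4 = qbinom (m + int j) (int j)"
  have x1: "- (int (Suc j + 1) * int (Suc j) div 2) - int (Suc j) * (m - 1) = E + - m"
    unfolding E_def half_shift by (simp add: algebra_simps)
  have x2: "- (int (j + 1) * int j div 2) - int j * (m - 1) = E + int j"
    unfolding E_def by (simp add: algebra_simps)
  have x3: "- (int (Suc j + 1) * int (Suc j) div 2) - int (Suc j) * (m - 2) = E + (- m + int j + 1)"
    unfolding E_def half_shift by (simp add: algebra_simps)
  have y1: "int (Suc j) + (m - 1) = m + int j" by simp
  have y2: "int j + (m - 1) = m + int j - 1" by simp
  have y3: "int (Suc j) + (m - 2) = m + int j - 1" by simp
  have y4: "int (Suc j) = int j + 1" by simp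
  have t1: "T (m - 1) (Suc j) = - s * (e * qpow (- m)) * Q1"
    unfolding T_def unfolding x1 y1 unfolding Q1_def s_def e_def qpow_add y4 by simp
  have t2: "T (m - 1) j = s * (e * qpow (int j)) * Q2"
    unfolding T_def unfolding x2 y2 unfolding Q2_def s_def e_def qpow_add by simp
  have t3: "T (m - 2) (Suc j) = - s * (e * qpow (- m + int j + 1)) * Q3"
    unfolding T_def unfolding x3 y3 unfolding Q3_def s_def e_def qpow_add y4 by simp
  have t4: "T m j = s * e * Q4"
    unfolding T_def Q4_def s_def e_def E_def by (simp add: add.commute)
  have k: "- qpow (- m) * Q1 + qpow (int j) * Q2 = - qpow (- m + int j + 1) * Q3 + (1 - qpow (- m)) * Q4"
  proof (rule key_alg)
    show "Q1 = Q2 + qpow (int j + 1) * Q3"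
      unfolding Q1_def Q2_def Q3_def by (rule pascal)
    show "(qpow m - 1) * Q4 = (qpow (m + int j) - 1) * Q2"
      unfolding Q4_def Q2_def by (rule absorb)
    show "qpow (- m) * qpow m = 1" by (rule qpow_add'[where c=0, simplified]) simp
    show "qpow (- m) * qpow (m + int j) = qpow (int j)" by (rule qpow_add') simp
    show "qpow (- m) * qpow (int j + 1) = qpow (- m + int j + 1)" by (rule qpow_add') simp
  qed
  have "s * e * (- qpow (- m) * Q1 + qpow (int j) * Q2) = s * e * (- qpow (- m + int j + 1) * Q3 + (1 - qpow (- m)) * Q4)"
    using k by simp
  then show ?thesis unfolding t1 t2 t3 t4 by (simp add: algebra_simps)
qed


lemma binX: "((1 + fps_X) ^ n :: 'a::comm_ring_1 fps) $ k = of_nat (n choose k)"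
proof (induction n arbitrary: k)
  case 0 then show ?case by (cases k) simp_all
next
  case (Suc n)
  have "(1 + fps_X) ^ Suc n = (1 + fps_X) ^ n + fps_X * ((1 + fps_X) ^ n :: 'a fps)"
    by (simp add: algebra_simps)
  then have "((1 + fps_X) ^ Suc n :: 'a fps) $ k = ((1 + fps_X) ^ n + fps_X * (1 + fps_X) ^ n) $ k"
    by (simp only:)
  then show ?case using Suc by (cases k) (simp_all del: power_Suc)
qed

lemma coef_alt: "coef n k = of_nat (n choose k) - (if k = 0 then 0 else of_nat (n choose (k - 1)))"
proof -
  have "(1 - fps_X) * (1 + fps_X) ^ n = (1 + fps_X) ^ n - fps_X * ((1 + fps_X) ^ n :: rat fls fps)"
    by (simp add: algebra_simps)
  then have "coef n k = ((1 + fps_X) ^ n - fps_X * ((1 + fps_X) ^ n :: rat fls fps)) $ k"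
    unfolding coef_def by (simp only:)
  then show ?thesis by (simp add: binX)
qed

lemma coef_0: "coef n 0 = 1"
  by (simp add: coef_alt)

lemma coef_Suc: "coef (Suc n) (Suc k) = coef n (Suc k) + coef n k"
proof -
  have "(1 - fps_X) * (1 + fps_X) ^ Suc n = (1 - fps_X) * (1 + fps_X) ^ n + fps_X * ((1 - fps_X) * (1 + fps_X) ^ n :: rat fls fps)"
    by (simp add: algebra_simps)
  then have "coef (Suc n) (Suc k) = ((1 - fps_X) * (1 + fps_X) ^ n + fps_X * ((1 - fps_X) * (1 + fps_X) ^ n :: rat fls fps)) $ Suc k"
    unfolding coef_def by (simp only:)
  then show ?thesis unfolding coef_def by simp
qed

lemma coef_mid: "coef (Suc (2 * r)) (Suc r) = 0"
proof -
  have "(2 * r + 1) choose (Suc r) = (2 * r + 1) choose r"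
    using binomial_symmetric[of "Suc r" "2 * r + 1"] by simp
  then show ?thesis by (simp add: coef_alt)
qed

lemma T0: "T a 0 = (if a \<ge> 0 then 1 else 0)"
  unfolding T_def by (simp add: qbinom_0)

lemma edge: "coef n (Suc r) * T (int n - 2 * int r - 1) 0 = coef n (Suc r) * T (int n - 2 * int r - 2) 0"
proof (cases "n = 2 * r + 1")
  case True then show ?thesis using coef_mid[of r] by simp
next
  case False then show ?thesis by (simp add: T0)
qed

lemma B_00: "B 0 0 = 1"
  unfolding B_def by (simp add: coef_0 T0)

lemma B_0S: "B 0 (Suc r) = 0"
proof -
  have "T (int 0 - 2 * int (Suc r)) (Suc r - k) = 0" if "k \<le> Suc r" for k
    unfolding T_def using that by (simp add: qbinom_lt)
  then show ?thesis unfolding B_def by simp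
qed

lemma B_S0: "B (Suc n) 0 = 1"
  unfolding B_def by (simp add: coef_0 T0)

lemma B_rec: "B (Suc n) (Suc r) = qpow (int r + 1) * B n (Suc r) + (qpow (int n - int r) - qpow (int r)) * B n r"
proof -
  define m where "m = int n - 2 * int r"
  define S1 where "S1 = (\<Sum>k\<le>Suc r. coef n k * T (m - 1) (Suc r - k))"
  define S2 where "S2 = (\<Sum>k\<le>r. coef n k * T (m - 1) (r - k))"
  define S3 where "S3 = (\<Sum>k\<le>Suc r. coef n k * T (m - 2) (Suc r - k))"
  define S4 where "S4 = (\<Sum>k\<le>r. coef n k * T m (r - k))"
  define Q where "Q = qpow ((int r + 1) * (int n - int r))"
  have m1: "int (Suc n) - 2 * int (Suc r) = m - 1" unfolding m_def by simp
  have m2: "int n - 2 * int (Suc r) = m - 2" unfolding m_def by simp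
  have "(\<Sum>k\<le>Suc r. coef (Suc n) k * T (m - 1) (Suc r - k))
      = coef (Suc n) 0 * T (m - 1) (Suc r) + (\<Sum>k\<le>r. coef (Suc n) (Suc k) * T (m - 1) (r - k))"
    by (subst sum.atMost_Suc_shift) simp
  also have "\<dots> = coef n 0 * T (m - 1) (Suc r) + (\<Sum>k\<le>r. coef n (Suc k) * T (m - 1) (r - k)) + S2"
    unfolding S2_def coef_Suc coef_0 by (simp add: sum.distrib algebra_simps)
  also have "coef n 0 * T (m - 1) (Suc r) + (\<Sum>k\<le>r. coef n (Suc k) * T (m - 1) (r - k)) = S1"
    unfolding S1_def by (subst sum.atMost_Suc_shift) simp
  finally have L: "(\<Sum>k\<le>Suc r. coef (Suc n) k * T (m - 1) (Suc r - k)) = S1 + S2" .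
  have core: "S1 + S2 = S3 + (1 - qpow (- m)) * S4"
  proof -
    have "S1 = (\<Sum>k\<le>r. coef n k * T (m - 1) (Suc (r - k))) + coef n (Suc r) * T (m - 1) 0"
      unfolding S1_def by (simp add: Suc_diff_le)
    moreover have "S3 = (\<Sum>k\<le>r. coef n k * T (m - 2) (Suc (r - k))) + coef n (Suc r) * T (m - 2) 0"
      unfolding S3_def by (simp add: Suc_diff_le)
    moreover have "coef n (Suc r) * T (m - 1) 0 = coef n (Suc r) * T (m - 2) 0"
      unfolding m_def by (rule edge)
    moreover have "(\<Sum>k\<le>r. coef n k * T (m - 1) (Suc (r - k))) + S2
       = (\<Sum>k\<le>r. coef n k * T (m - 2) (Suc (r - k))) + (1 - qpow (- m)) * S4"
    proof -
      have "(\<Sum>k\<le>r. coef n k * T (m - 1) (Suc (r - k))) + S2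
          = (\<Sum>k\<le>r. coef n k * (T (m - 1) (Suc (r - k)) + T (m - 1) (r - k)))"
        unfolding S2_def by (simp add: sum.distrib algebra_simps)
      also have "\<dots> = (\<Sum>k\<le>r. coef n k * (T (m - 2) (Suc (r - k)) + (1 - qpow (- m)) * T m (r - k)))"
        by (simp only: T_id)
      also have "\<dots> = (\<Sum>k\<le>r. coef n k * T (m - 2) (Suc (r - k))) + (1 - qpow (- m)) * S4"
        unfolding S4_def sum_distrib_left sum.distrib[symmetric] by (rule sum.cong) (simp_all add: algebra_simps)
      finally show ?thesis .
    qed
    ultimately show ?thesis by (simp add: algebra_simps)
  qed
  have LHS: "B (Suc n) (Suc r) = Q * (S1 + S2)"
  proof -
    have "int (Suc r) * (int (Suc n) - int (Suc r)) = (int r + 1) * (int n - int r)" by simp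
    then show ?thesis unfolding B_def m1 L Q_def by (simp only:)
  qed
  have p1: "qpow (int r + 1) * qpow ((int r + 1) * (int n - (int r + 1))) = Q"
    unfolding Q_def by (rule qpow_add') (simp add: algebra_simps)
  have p2: "qpow (int n - int r) * qpow (int r * (int n - int r)) = Q"
    unfolding Q_def by (rule qpow_add') (simp add: algebra_simps)
  have p3: "qpow (int r) * qpow (int r * (int n - int r)) = Q * qpow (- m)"
    unfolding Q_def m_def by (simp only: qpow_add) (rule arg_cong[where f=qpow], simp add: algebra_simps)
  have R1: "B n (Suc r) = qpow ((int r + 1) * (int n - (int r + 1))) * S3"
  proof -
    have "int (Suc r) * (int n - int (Suc r)) = (int r + 1) * (int n - (int r + 1))" by (simp add: add.commute)
    then show ?thesis unfolding B_def m2 S3_def by (simp only:)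
  qed
  have R2: "B n r = qpow (int r * (int n - int r)) * S4"
    unfolding B_def S4_def m_def by simp
  have "qpow (int r + 1) * B n (Suc r) + (qpow (int n - int r) - qpow (int r)) * B n r
      = (qpow (int r + 1) * qpow ((int r + 1) * (int n - (int r + 1)))) * S3
        + (qpow (int n - int r) * qpow (int r * (int n - int r))) * S4
        - (qpow (int r) * qpow (int r * (int n - int r))) * S4"
    unfolding R1 R2 by (simp only: algebra_simps)
  also have "\<dots> = Q * (S3 + (1 - qpow (- m)) * S4)"
    unfolding p1 p2 p3 by (simp add: algebra_simps)
  finally show ?thesis unfolding LHS core by simp
qed

lemma A_B: "A n r = B n r"
  by (induction n r rule: A.induct) (simp_all add: B_00 B_0S B_S0 B_rec)


lemma shift_one_times: "fls_shift k (1::'a::semiring_1 fls) * f = fls_shift k f"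
  using fls_X_intpow_times_conv_shift(1)[of "- k" f] by simp

lemma CT_B:
  "CT ((1 - fls_X) * (1 + fls_X) ^ n * fls_const (qpow (int r * (int n - int r)))
        * fls_X_intpow (- int r) * Sser n r) = B n r"
proof -
  define F where "F = ((1 - fps_X) * (1 + fps_X) ^ n :: rat fls fps)"
  define G where "G = Abs_fps (T (int n - 2 * int r))"
  define a where "a = qpow (int r * (int n - int r))"
  have h1: "(1 - fls_X) * (1 + fls_X) ^ n = fps_to_fls F"
    unfolding F_def by (simp add: fls_times_fps_to_fls fps_to_fls_power)
  have h2: "Sser n r = fps_to_fls G"
    unfolding Sser_def G_def T_def by (simp only: add_diff_eq)
  have eq: "(1 - fls_X) * (1 + fls_X) ^ n * fls_const a * fls_X_intpow (- int r) * Sser n r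
      = fls_const a * (fls_X_intpow (- int r) * fps_to_fls (F * G))"
    unfolding h1 h2 fls_times_fps_to_fls by (simp only: ac_simps)
  have "CT ((1 - fls_X) * (1 + fls_X) ^ n * fls_const a * fls_X_intpow (- int r) * Sser n r)
      = a * (F * G) $ r"
    unfolding CT_def eq by (simp add: shift_one_times)
  also have "\<dots> = B n r"
    unfolding B_def a_def fps_mult_nth F_def G_def coef_def atLeast0AtMost by simp
  finally show ?thesis unfolding a_def .
qed

theorem lemma1:
  fixes n r :: nat
  shows "A n r = CT ((1 - fls_X) * (1 + fls_X) ^ n * fls_const (qpow (int r * (int n - int r)))
                     * fls_X_intpow (- int r) * Sser n r)"
  unfolding CT_B by (rule A_B)

end
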